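(* Let $S$ be a semigroup, $I,J$ nonempty index sets, and $P=(p_{ji})_{j\in J,i\in I}$ a $J\times I$ matrix with entries in $S$. If the Rees matrix semigroup $\mathcal{M}[S;I,J;P]$ is DSC, then $|I|=|J|=1$ and $S$ is DSC.
   Context: The Rees matrix semigroup $\mathcal{M}[S;I,J;P]$ is the set $I\times S\times J$ with multiplication $(i,g,j)(k,h,l)=(i,g\,p_{jk}\,h,l)$. For a semigroup $T$, a diagonal subsemigroup of $T\times T$ is a subsemigroup containing $\{(t,t)\colon t\in T\}$; a congruence on $T$ is a diagonal subsemigroup that is symmetric and transitive; $T$ is DSC if every diagonal subsemigroup of $T\times T$ is a congruence on $T$. *)

theory Defs
  imports Main
begin

definition semigroup_on :: "'a set \<Rightarrow> ('a \<Rightarrow> 'a \<Rightarrow> 'a) \<Rightarrow> bool" where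
  "semigroup_on T f \<longleftrightarrow>
     (\<forall>x\<in>T. \<forall>y\<in>T. f x y \<in> T) \<and>
     (\<forall>x\<in>T. \<forall>y\<in>T. \<forall>z\<in>T. f (f x y) z = f x (f y z))"

definition diagonal_subsemigroup ::
    "'a set \<Rightarrow> ('a \<Rightarrow> 'a \<Rightarrow> 'a) \<Rightarrow> ('a \<times> 'a) set \<Rightarrow> bool" where
  "diagonal_subsemigroup T f R \<longleftrightarrow>
     R \<subseteq> T \<times> T \<and>
     (\<forall>(a, b)\<in>R. \<forall>(c, d)\<in>R. (f a c, f b d) \<in> R) \<and>
     (\<forall>t\<in>T. (t, t) \<in> R)"

definition congruence_on ::
    "'a set \<Rightarrow> ('a \<Rightarrow> 'a \<Rightarrow> 'a) \<Rightarrow> ('a \<times> 'a) set \<Rightarrow> bool" where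
  "congruence_on T f R \<longleftrightarrow> diagonal_subsemigroup T f R \<and> sym R \<and> trans R"

definition DSC :: "'a set \<Rightarrow> ('a \<Rightarrow> 'a \<Rightarrow> 'a) \<Rightarrow> bool" where
  "DSC T f \<longleftrightarrow> (\<forall>R. diagonal_subsemigroup T f R \<longrightarrow> congruence_on T f R)"

definition rees_carrier :: "'i set \<Rightarrow> 'a set \<Rightarrow> 'j set \<Rightarrow> ('i \<times> 'a \<times> 'j) set" where
  "rees_carrier I S J = I \<times> S \<times> J"

definition rees_mult ::
    "('a \<Rightarrow> 'a \<Rightarrow> 'a) \<Rightarrow> ('j \<Rightarrow> 'i \<Rightarrow> 'a) \<Rightarrow>
     ('i \<times> 'a \<times> 'j) \<Rightarrow> ('i \<times> 'a \<times> 'j) \<Rightarrow> ('i \<times> 'a \<times> 'j)" where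
  "rees_mult f P x y =
     (case x of (i, g, j) \<Rightarrow> case y of (k, h, l) \<Rightarrow> (i, f (f g (P j k)) h, l))"

end

theory Submission
  imports Defs
begin

lemma rm_simp: "rees_mult f P (i, g, j) (k, h, l) = (i, f (f g (P j k)) h, l)"
  by (simp add: rees_mult_def)

lemma rm_closed:
  assumes "semigroup_on S f" "\<forall>j\<in>J. \<forall>i\<in>I. P j i \<in> S"
    "x \<in> rees_carrier I S J" "y \<in> rees_carrier I S J"
  shows "rees_mult f P x y \<in> rees_carrier I S J"
  using assms by (cases x; cases y) (auto simp: rees_carrier_def rm_simp semigroup_on_def)

lemma rm_fst: "fst (rees_mult f P x y) = fst x"
  by (cases x; cases y) (auto simp: rm_simp)

lemma rm_lst: "snd (snd (rees_mult f P x y)) = snd (snd y)"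
  by (cases x; cases y) (auto simp: rm_simp)

lemma two_elems:
  assumes "I \<noteq> {}" "card I \<noteq> 1"
  shows "\<exists>i\<in>I. \<exists>k\<in>I. i \<noteq> k"
proof (rule ccontr)
  assume "\<not> ?thesis"
  then obtain i where "I = {i}" using assms(1) by blast
  then show False using assms(2) by simp
qed

theorem mainTheorem4:
  fixes S :: "'a set" and f :: "'a \<Rightarrow> 'a \<Rightarrow> 'a"
    and I :: "'i set" and J :: "'j set" and P :: "'j \<Rightarrow> 'i \<Rightarrow> 'a"
  assumes "semigroup_on S f"
    and "I \<noteq> {}" and "J \<noteq> {}"
    and "\<forall>j\<in>J. \<forall>i\<in>I. P j i \<in> S"
    and "DSC (rees_carrier I S J) (rees_mult f P)"
  shows "card I = 1 \<and> card J = 1 \<and> DSC S f"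
proof -
  let ?T = "rees_carrier I S J" and ?m = "rees_mult f P"
  obtain j0 where j0: "j0 \<in> J" using assms(3) by blast
  obtain i0 where i0: "i0 \<in> I" using assms(2) by blast
  have p0: "P j0 i0 \<in> S" using assms(4) i0 j0 by blast
  have cI: "card I = 1"
  proof (rule ccontr)
    assume "card I \<noteq> 1"
    then obtain i k where ik: "i \<in> I" "k \<in> I" "i \<noteq> k" using two_elems[OF assms(2)] by blast
    define R where "R = {(a, b). a \<in> ?T \<and> b \<in> ?T \<and> (fst a = fst b \<or> (fst a = i \<and> fst b = k))}"
    have cl: "\<And>x y. x \<in> ?T \<Longrightarrow> y \<in> ?T \<Longrightarrow> ?m x y \<in> ?T"
      by (rule rm_closed[OF assms(1) assms(4)])
    have "diagonal_subsemigroup ?T ?m R"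
      unfolding diagonal_subsemigroup_def
    proof (intro conjI)
      show "R \<subseteq> ?T \<times> ?T" unfolding R_def by blast
      show "\<forall>t\<in>?T. (t, t) \<in> R" unfolding R_def by blast
      show "\<forall>(a, b)\<in>R. \<forall>(c, d)\<in>R. (?m a c, ?m b d) \<in> R"
        unfolding R_def using cl by (clarsimp simp only: rm_fst) (simp add: rm_fst)
    qed
    then have "sym R" using assms(5) unfolding DSC_def congruence_on_def by simp
    moreover have "((i, P j0 i0, j0), (k, P j0 i0, j0)) \<in> R"
      using ik p0 j0 by (auto simp: R_def rees_carrier_def)
    ultimately have "((k, P j0 i0, j0), (i, P j0 i0, j0)) \<in> R" by (meson symD)
    then show False using ik by (auto simp: R_def)
  qed
  have cJ: "card J = 1"
  proof (rule ccontr)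
    assume "card J \<noteq> 1"
    then obtain i k where ik: "i \<in> J" "k \<in> J" "i \<noteq> k" using two_elems[OF assms(3)] by blast
    define R where "R = {(a, b). a \<in> ?T \<and> b \<in> ?T \<and> (snd (snd a) = snd (snd b) \<or> (snd (snd a) = i \<and> snd (snd b) = k))}"
    have cl: "\<And>x y. x \<in> ?T \<Longrightarrow> y \<in> ?T \<Longrightarrow> ?m x y \<in> ?T"
      by (rule rm_closed[OF assms(1) assms(4)])
    have "diagonal_subsemigroup ?T ?m R"
      unfolding diagonal_subsemigroup_def
    proof (intro conjI)
      show "R \<subseteq> ?T \<times> ?T" unfolding R_def by blast
      show "\<forall>t\<in>?T. (t, t) \<in> R" unfolding R_def by blast
      show "\<forall>(a, b)\<in>R. \<forall>(c, d)\<in>R. (?m a c, ?m b d) \<in> R"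
        unfolding R_def using cl by (clarsimp simp only: rm_lst) (simp add: rm_lst)
    qed
    then have "sym R" using assms(5) unfolding DSC_def congruence_on_def by simp
    moreover have "((i0, P j0 i0, i), (i0, P j0 i0, k)) \<in> R"
      using ik p0 i0 by (auto simp: R_def rees_carrier_def)
    ultimately have "((i0, P j0 i0, k), (i0, P j0 i0, i)) \<in> R" by (meson symD)
    then show False using ik by (auto simp: R_def)
  qed
  have IJ: "I = {i0}" "J = {j0}"
    using cI cJ i0 j0 by (auto simp: card_Suc_eq)
  let ?p = "P j0 i0"
  have "DSC S f"
    unfolding DSC_def
  proof (intro allI impI)
    fix R assume R: "diagonal_subsemigroup S f R"
    define R' where "R' = {((i0, a, j0), (i0, b, j0)) | a b. (a, b) \<in> R}"
    have RS: "R \<subseteq> S \<times> S" and Rc: "\<And>a b c d. (a,b) \<in> R \<Longrightarrow> (c,d) \<in> R \<Longrightarrow> (f a c, f b d) \<in> R"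
      and Rd: "\<And>t. t \<in> S \<Longrightarrow> (t,t) \<in> R"
      using R unfolding diagonal_subsemigroup_def by blast+
    have "diagonal_subsemigroup ?T ?m R'"
      unfolding diagonal_subsemigroup_def
    proof (intro conjI)
      show "R' \<subseteq> ?T \<times> ?T" using RS by (auto simp: R'_def IJ rees_carrier_def)
      have H: "\<And>u v. u \<in> R' \<Longrightarrow> v \<in> R' \<Longrightarrow> (?m (fst u) (fst v), ?m (snd u) (snd v)) \<in> R'"
      proof -
        fix u v assume u: "u \<in> R'" and v: "v \<in> R'"
        obtain a b where u': "u = ((i0, a, j0), (i0, b, j0))" and ab: "(a, b) \<in> R"
          using u unfolding R'_def by blast
        obtain c d where v': "v = ((i0, c, j0), (i0, d, j0))" and cd: "(c, d) \<in> R"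
          using v unfolding R'_def by blast
        have "(f (f a ?p) c, f (f b ?p) d) \<in> R" using Rc[OF Rc[OF ab Rd[OF p0]] cd] .
        then have "(?m (i0, a, j0) (i0, c, j0), ?m (i0, b, j0) (i0, d, j0)) \<in> R'"
          unfolding R'_def rm_simp by blast
        then show "(?m (fst u) (fst v), ?m (snd u) (snd v)) \<in> R'" using u' v' by simp
      qed
      show "\<forall>(a, b)\<in>R'. \<forall>(c, d)\<in>R'. (?m a c, ?m b d) \<in> R'"
        using H by fastforce
      show "\<forall>t\<in>?T. (t, t) \<in> R'" using Rd by (auto simp: R'_def IJ rees_carrier_def)
    qed
    then have c: "sym R' \<and> trans R'" using assms(5) unfolding DSC_def congruence_on_def by simp
    have mem: "\<And>a b. ((i0, a, j0), (i0, b, j0)) \<in> R' \<longleftrightarrow> (a, b) \<in> R" by (auto simp: R'_def)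
    have "sym R"
    proof (rule symI)
      fix a b assume "(a, b) \<in> R"
      then show "(b, a) \<in> R" using c mem by (meson symD)
    qed
    moreover have "trans R"
    proof (rule transI)
      fix a b d assume "(a, b) \<in> R" "(b, d) \<in> R"
      then show "(a, d) \<in> R" using c mem by (meson transD)
    qed
    ultimately show "congruence_on S f R" using R by (simp add: congruence_on_def)
  qed
  then show ?thesis using cI cJ by simp
qed

end
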